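(* Let $\{q_n\}$ be the Fibonacci Quilt sequence and, for $n,k\ge0$, let $q_{n,k}$ denote the number of integers $m\in[0,q_{n+1})$ whose Greedy-6 decomposition has exactly $k$ summands (with $0$ having the empty decomposition). Then \[q_{n,k}=\begin{cases}1 & k=0,\ n\ge0,\ \text{or } k=2,\ n=5,\\ n & k=1,\ n\ge0,\\ 1+\frac{(n-5)(n-4)}{2} & k=2,\ n\ge6,\\ q_{n-5,k-1}+q_{n-1,k} & k\ge3,\ n\ge5(k-1),\\ 0 & k\ge3,\ n<5(k-1),\ \text{or } k=2,\ n\le4,\end{cases}\] and $H(x,y)=\sum_{n\ge0}\sum_{k\ge0}q_{n,k}x^ny^k$ equals \[H(x,y)=\frac{1+(x+x^2+x^3+x^4)y+x^5y^2}{1-x-yx^5}.\]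
   Context: Here $q_{n,k}$ (two indices) is a counting function distinct from the sequence term $q_n$. Given an increasing sequence $\{q_i\}$, a decomposition $m=q_{\ell_1}+\dots+q_{\ell_t}$ with $q_{\ell_1}>\dots>q_{\ell_t}$ is FQ-legal if $|\ell_i-\ell_j|\notin\{0,1,3,4\}$ for $i\neq j$ and $\{1,3\}\not\subset\{\ell_1,\dots,\ell_t\}$. The Fibonacci Quilt sequence has $q_1=1$ and each $q_i$ ($i\ge2$) is the smallest positive integer with no FQ-legal decomposition using $q_1,\dots,q_{i-1}$ (it begins $1,2,3,4,5,7,9,12,\dots$). The Greedy-6 decomposition of a positive integer $m$: if $m=q_n$ it is $q_n$; if $m=6$ it is $q_4+q_2$; otherwise write $m=q_{\ell_1}+x$ with $q_{\ell_1}<m<q_{\ell_1+1}$, $x>0$, and iterate on $x$. *)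

theory Defs
  imports Main "HOL-Computational_Algebra.Formal_Power_Series"
begin

definition FQ_legal :: "nat set \<Rightarrow> bool" where
  "FQ_legal S \<longleftrightarrow>
     (\<forall>a\<in>S. \<forall>b\<in>S. a \<noteq> b \<longrightarrow> nat \<bar>int a - int b\<bar> \<notin> {1, 3, 4}) \<and> \<not> ({1, 3} \<subseteq> S)"

definition FQ_representable :: "(nat \<Rightarrow> nat) \<Rightarrow> nat \<Rightarrow> nat \<Rightarrow> bool" where
  "FQ_representable f i m \<longleftrightarrow>
     (\<exists>S. S \<subseteq> {1..<i} \<and> S \<noteq> {} \<and> FQ_legal S \<and> (\<Sum>l\<in>S. f l) = m)"

text \<open>fq_list i = [q_1, ..., q_i].\<close>
fun fq_list :: "nat \<Rightarrow> nat list" where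
  "fq_list 0 = []"
| "fq_list (Suc i) =
     (let L = fq_list i in
      L @ [if i = 0 then 1
           else (LEAST m. 0 < m \<and> \<not> FQ_representable (\<lambda>j. L ! (j - 1)) (Suc i) m)])"

text \<open>The Fibonacci Quilt sequence q_n (n \<ge> 1); the value at 0 is a dummy 0.\<close>
definition fq :: "nat \<Rightarrow> nat" where
  "fq n = (if n = 0 then 0 else fq_list n ! (n - 1))"

text \<open>Greedy-6 decomposition (list of indices of the summands), computed with a fuel
  parameter; since every step decreases m by at least q_1 = 1, fuel m suffices.\<close>
fun greedy6_aux :: "nat \<Rightarrow> nat \<Rightarrow> nat list" where
  "greedy6_aux 0 m = []"
| "greedy6_aux (Suc f) m =
     (if m = 0 then []
      else if (\<exists>n\<ge>1. fq n = m) then [THE n. n \<ge> 1 \<and> fq n = m]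
      else if m = 6 then [4, 2]
      else (let l = (THE l. 1 \<le> l \<and> fq l < m \<and> m < fq (Suc l))
            in l # greedy6_aux f (m - fq l)))"

definition greedy6 :: "nat \<Rightarrow> nat list" where
  "greedy6 m = greedy6_aux m m"

definition qnk :: "nat \<Rightarrow> nat \<Rightarrow> nat" where
  "qnk n k = card {m. m < fq (Suc n) \<and> length (greedy6 m) = k}"

text \<open>Bivariate generating function H(x,y) = sum q_{n,k} x^n y^k, as a power series in x
  whose coefficients are power series in y.\<close>
definition H :: "int fps fps" where
  "H = Abs_fps (\<lambda>n. Abs_fps (\<lambda>k. int (qnk n k)))"

end

theory Submission imports Defs begin

fun Q :: "nat \<Rightarrow> nat" where
  "Q n = (if n \<le> 5 then n else if n = 6 then 7 else Q (n-1) + Q (n-5))"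
declare Q.simps[simp del]

lemma Q_le5: "n \<le> 5 \<Longrightarrow> Q n = n" by (subst Q.simps) simp
lemma Q_6: "Q 6 = 7" by (subst Q.simps) simp
lemma Q_unf: "n \<ge> 7 \<Longrightarrow> Q n = Q (n-1) + Q (n-5)" by (subst Q.simps) simp

lemma Q_0_10: "Q 0 = 0" "Q 1 = 1" "Q 2 = 2" "Q 3 = 3" "Q 4 = 4" "Q 5 = 5" "Q 6 = 7"
  "Q 7 = 9" "Q 8 = 12" "Q 9 = 16" "Q 10 = 21"
proof -
  show a: "Q 0 = 0" "Q 1 = 1" "Q 2 = 2" "Q 3 = 3" "Q 4 = 4" "Q 5 = 5" "Q 6 = 7"
    by (simp_all add: Q_le5 Q_6)
  show b: "Q 7 = 9" using Q_unf[of 7] a by simp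
  show c: "Q 8 = 12" using Q_unf[of 8] a b by simp
  show d: "Q 9 = 16" using Q_unf[of 9] a b c by simp
  show "Q 10 = 21" using Q_unf[of 10] a b c d by simp
qed

lemma Q_rec1: "n \<ge> 6 \<Longrightarrow> Q (Suc n) = Q n + Q (n - 4)"
  using Q_unf[of "Suc n"] by simp

lemma Q_rec2: "n \<ge> 2 \<Longrightarrow> Q (n + 3) = Q (n + 1) + Q n"
proof (induction n rule: less_induct)
  case (less n)
  show ?case
  proof (cases "n \<ge> 7")
    case True
    have a0: "Q ((n-1)+3) = Q ((n-1)+1) + Q (n-1)" by (rule less.IH) (use True in auto)
    have "(n-1)+3 = n+2" "(n-1)+1 = n" using True by auto
    with a0 have a: "Q (n+2) = Q n + Q (n-1)" by simp
    have b0: "Q ((n-5)+3) = Q ((n-5)+1) + Q (n-5)" by (rule less.IH) (use True in auto)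
    have "(n-5)+3 = n-2" "(n-5)+1 = n-4" using True by auto
    with b0 have b: "Q (n-2) = Q (n-4) + Q (n-5)" by simp
    have c: "Q (n+3) = Q (n+2) + Q (n-2)" using Q_unf[of "n+3"] True by simp
    have d: "Q (n+1) = Q n + Q (n-4)" using Q_unf[of "n+1"] True by simp
    have e: "Q n = Q (n-1) + Q (n-5)" using Q_unf[of n] True by simp
    show ?thesis using a b c d e by simp
  next
    case False
    then have "n = 2 \<or> n = 3 \<or> n = 4 \<or> n = 5 \<or> n = 6" using less.prems by auto
    then show ?thesis by (auto simp: Q_0_10)
  qed
qed

lemma Q_ge: "n \<le> Q n"
proof (induction n rule: less_induct)
  case (less n)
  show ?case
  proof (cases "n \<ge> 7")
    case True
    have "Q n = Q (n-1) + Q (n-5)" using Q_unf[of n] True by simp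
    moreover have "n - 1 \<le> Q (n-1)" "n - 5 \<le> Q (n-5)" using less.IH True by auto
    ultimately show ?thesis using True by linarith
  next
    case False
    then show ?thesis proof (cases "n \<le> 5")
      case False then have "n = 6" using \<open>\<not> n \<ge> 7\<close> by simp
      then show ?thesis by (simp add: Q_6)
    qed (simp add: Q_le5)
  qed
qed

lemma Q_Suc_less: "Q n < Q (Suc n)"
proof (cases "n \<ge> 6")
  case True
  then have "Q (n - 4) \<ge> 2" using Q_ge[of "n-4"] by linarith
  then show ?thesis using Q_rec1[OF True] by simp
next
  case False
  then have "n \<le> 5" by simp
  then show ?thesis by (cases "n = 5") (auto simp: Q_le5 Q_0_10)
qed

lemma Q_smono: "strict_mono Q"
  using Q_Suc_less strict_mono_Suc_iff by blast

lemma Q_less_iff[simp]: "Q a < Q b \<longleftrightarrow> a < b"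
  using Q_smono strict_mono_less by blast
lemma Q_le_iff[simp]: "Q a \<le> Q b \<longleftrightarrow> a \<le> b"
  using Q_smono strict_mono_less_eq by blast
lemma Q_eq_iff[simp]: "Q a = Q b \<longleftrightarrow> a = b"
  using Q_smono strict_mono_eq by blast
lemma Q_pos: "n \<ge> 1 \<Longrightarrow> Q n > 0" using Q_ge[of n] by linarith


lemma Q_rec2': "a \<ge> 1 \<Longrightarrow> Q a + Q (a+1) \<le> Q (a+3)"
proof (cases "a = 1")
  case True then show ?thesis by (simp add: Q_le5)
next
  case False
  moreover assume "a \<ge> 1"
  ultimately show ?thesis using Q_rec2[of a] by simp
qed

lemma nat_absdiff: "nat \<bar>int a - int b\<bar> = (if b \<le> a then a - b else b - a)"
  by auto

lemma legal_iff: "FQ_legal S \<longleftrightarrow> (\<forall>a\<in>S. \<forall>b\<in>S. b < a \<longrightarrow> a - b \<notin> {1,3,4}) \<and> \<not> ({1,3} \<subseteq> S)"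
  unfolding FQ_legal_def nat_absdiff
  apply (rule iffI)
   apply (metis less_imp_le less_not_refl)
  apply (auto split: if_splits)
  done

lemma legal_sub: "FQ_legal S \<Longrightarrow> T \<subseteq> S \<Longrightarrow> FQ_legal T"
  unfolding legal_iff by blast

lemma legal_diff: "FQ_legal S \<Longrightarrow> a \<in> S \<Longrightarrow> x \<in> S \<Longrightarrow> x < a \<Longrightarrow> x + 1 \<noteq> a \<and> x + 3 \<noteq> a \<and> x + 4 \<noteq> a"
proof -
  assume l: "FQ_legal S" "a \<in> S" "x \<in> S" "x < a"
  then have "a - x \<notin> {1,3,4}" unfolding legal_iff by blast
  then have "a - x \<noteq> 1" "a - x \<noteq> 3" "a - x \<noteq> 4" by auto
  with l(4) show ?thesis by (intro conjI; linarith)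
qed

lemma Bnd: "FQ_legal S \<Longrightarrow> S \<subseteq> {1..a} \<Longrightarrow> sum Q S < Q (a+3)"
proof (induction a arbitrary: S rule: less_induct)
  case (less a)
  have finS: "finite S" using less.prems(2) finite_subset by blast
  show ?case
  proof (cases "a \<in> S")
    case False
    show ?thesis
    proof (cases "a = 0")
      case True
      then have "S = {}" using less.prems(2) by auto
      then show ?thesis using Q_pos[of "a+3"] by simp
    next
      case a0: False
      have "S \<subseteq> {1..a-1}"
      proof
        fix x assume x: "x \<in> S"
        then have "1 \<le> x" "x \<le> a" "x \<noteq> a" using less.prems(2) False by auto
        then show "x \<in> {1..a-1}" by simp
      qed
      from less.IH[OF _ less.prems(1) this] a0 have "sum Q S < Q (a - 1 + 3)" by simp
      also have "a - 1 + 3 = a + 2" using a0 by simp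
      also have "Q (a+2) < Q (a+3)" by simp
      finally show ?thesis .
    qed
  next
    case True
    define T where "T = S - {a}"
    have finT: "finite T" using finS T_def by simp
    have sS: "sum Q S = Q a + sum Q T" unfolding T_def using sum.remove[OF finS True] .
    have Tp: "\<And>x. x \<in> T \<Longrightarrow> 1 \<le> x \<and> x < a \<and> x \<noteq> a-1 \<and> x \<noteq> a-3 \<and> x \<noteq> a-4"
    proof -
      fix x assume x: "x \<in> T"
      then have xS: "x \<in> S" "x \<noteq> a" using T_def by auto
      then have "1 \<le> x" "x \<le> a" using less.prems(2) True by auto
      with xS have "x < a" by simp
      with legal_diff[OF less.prems(1) True xS(1)] \<open>1 \<le> x\<close> show "1 \<le> x \<and> x < a \<and> x \<noteq> a-1 \<and> x \<noteq> a-3 \<and> x \<noteq> a-4" by (intro conjI; linarith)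
    qed
    have legT: "FQ_legal T" using legal_sub[OF less.prems(1)] T_def by blast
    have a1: "a \<ge> 1" using True less.prems(2) by auto
    have sT: "sum Q T < Q (a+1)"
    proof (cases "a - 2 \<in> S")
      case True
      then have "a - 2 \<ge> 1" using less.prems(2) by auto
      then have "a \<ge> 3" by linarith
      have "T \<subseteq> {1..a-2}"
      proof
        fix x assume "x \<in> T"
        from Tp[OF this] have "1 \<le> x" "x < a" "x \<noteq> a - 1" by auto
        then show "x \<in> {1..a-2}" by simp
      qed
      from less.IH[OF _ legT this] \<open>a \<ge> 3\<close> have "sum Q T < Q (a - 2 + 3)" by simp
      also have "a - 2 + 3 = a + 1" using \<open>a \<ge> 3\<close> by simp
      finally show ?thesis .
    next
      case False
      have "a - 2 \<notin> T" using False T_def by auto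
      then have Tsub: "T \<subseteq> {1..a-5}"
      proof -
        have "x \<in> {1..a-5}" if x: "x \<in> T" for x
        proof -
          have h: "1 \<le> x" "x < a" "x \<noteq> a-1" "x \<noteq> a-3" "x \<noteq> a-4" "x \<noteq> a - 2"
            using Tp[OF x] \<open>a - 2 \<notin> T\<close> x by auto
          then have "x + 1 \<noteq> a" "x + 2 \<noteq> a" "x + 3 \<noteq> a" "x + 4 \<noteq> a" by auto
          with \<open>x < a\<close> have "x + 5 \<le> a" by linarith
          then have "x \<le> a - 5" by simp
          with h show ?thesis by simp
        qed
        then show ?thesis by blast
      qed
      show ?thesis
      proof (cases "a \<ge> 5")
        case True
        from less.IH[OF _ legT Tsub] True have "sum Q T < Q (a - 5 + 3)" by simp
        also have "\<dots> \<le> Q (a+1)" using True by simp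
        finally show ?thesis .
      next
        case False
        then have "T = {}" using Tsub by auto
        then show ?thesis using Q_pos[of "a+1"] by simp
      qed
    qed
    have "sum Q S < Q a + Q (a+1)" using sS sT by simp
    also have "\<dots> \<le> Q (a+3)" using Q_rec2'[OF a1] .
    finally show ?thesis .
  qed
qed


lemma G: "FQ_legal S \<Longrightarrow> S \<subseteq> {1..a} \<Longrightarrow> a < b \<Longrightarrow> sum Q S \<noteq> Q b"
proof (induction b arbitrary: S a rule: less_induct)
  case (less b)
  have finS: "finite S" using less.prems(2) finite_subset by blast
  show ?case
  proof (cases "S = {}")
    case True
    then show ?thesis using Q_pos[of b] less.prems(3) by simp
  next
    case False
    define l where "l = Max S"
    have lS: "l \<in> S" using Max_in[OF finS False] l_def by simp
    have Sl: "S \<subseteq> {1..l}" using less.prems(2) Max_ge[OF finS] l_def by auto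
    have l1: "l \<ge> 1" using lS less.prems(2) by auto
    have lb: "l < b" using less.prems Sl lS by auto
    show ?thesis
    proof
      assume eq: "sum Q S = Q b"
      have "Q b < Q (l+3)" using Bnd[OF less.prems(1) Sl] eq by simp
      then have "b < l + 3" by simp
      define T where "T = S - {l}"
      have finT: "finite T" using finS T_def by simp
      have sS: "sum Q S = Q l + sum Q T" unfolding T_def using sum.remove[OF finS lS] .
      have Tp: "\<And>x. x \<in> T \<Longrightarrow> 1 \<le> x \<and> x < l \<and> x \<noteq> l-1 \<and> x \<noteq> l-3 \<and> x \<noteq> l-4"
      proof -
        fix x assume x: "x \<in> T"
        then have xS: "x \<in> S" "x \<noteq> l" using T_def by auto
        then have "1 \<le> x" "x \<le> l" using Sl by auto
        with xS have "x < l" by simp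
        with legal_diff[OF less.prems(1) lS xS(1)] \<open>1 \<le> x\<close> show "1 \<le> x \<and> x < l \<and> x \<noteq> l-1 \<and> x \<noteq> l-3 \<and> x \<noteq> l-4" by (intro conjI; linarith)
      qed
      have legT: "FQ_legal T" using legal_sub[OF less.prems(1)] T_def by blast
      have "b = l + 1 \<or> b = l + 2" using lb \<open>b < l + 3\<close> by linarith
      then show False
      proof
        assume b2: "b = l + 2"
        show False
        proof (cases "l \<ge> 3")
          case True
          have "Q (l - 1 + 3) = Q (l - 1 + 1) + Q (l - 1)" using Q_rec2[of "l-1"] True by simp
          moreover have "l - 1 + 3 = b" "l - 1 + 1 = l" using True b2 by auto
          ultimately have "Q b = Q l + Q (l - 1)" by simp
          with eq sS have sT: "sum Q T = Q (l-1)" by simp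
          have "T \<subseteq> {1..l-2}"
          proof
            fix x assume "x \<in> T"
            from Tp[OF this] have "1 \<le> x" "x < l" "x \<noteq> l - 1" by auto
            then show "x \<in> {1..l-2}" by simp
          qed
          from less.IH[OF _ legT this] b2 True have "sum Q T \<noteq> Q (l-1)" by simp
          with sT show False by simp
        next
          case False
          have "T = {}"
          proof -
            have "x \<notin> T" for x
            proof
              assume "x \<in> T"
              from Tp[OF this] have "1 \<le> x" "x < l" "x \<noteq> l - 1" by auto
              with False show False by linarith
            qed
            then show ?thesis by blast
          qed
          then have "Q l = Q b" using eq sS by simp
          with b2 show False by simp
        qed
      next
        assume b1: "b = l + 1"
        show False
        proof (cases "l \<ge> 6")
          case True
          have "Q b = Q l + Q (l - 4)" using Q_rec1[OF True] b1 by simp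
          with eq sS have sT: "sum Q T = Q (l-4)" by simp
          show False
          proof (cases "l - 2 \<in> T")
            case True
            have "Q (l - 2) \<le> sum Q T" using finT True by (auto intro: member_le_sum)
            moreover have "Q (l - 4) < Q (l - 2)" using \<open>l \<ge> 6\<close> by simp
            ultimately show False using sT by simp
          next
            case False
            have "T \<subseteq> {1..l-5}"
            proof
              fix x assume x: "x \<in> T"
              have h: "1 \<le> x" "x < l" "x \<noteq> l-1" "x \<noteq> l-3" "x \<noteq> l-4" "x \<noteq> l - 2"
                using Tp[OF x] False x by auto
              then have "x + 1 \<noteq> l" "x + 2 \<noteq> l" "x + 3 \<noteq> l" "x + 4 \<noteq> l" by auto
              with \<open>x < l\<close> have "x + 5 \<le> l" by linarith
              with h show "x \<in> {1..l-5}" by simp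
            qed
            from less.IH[OF _ legT this] b1 \<open>l \<ge> 6\<close> have "sum Q T \<noteq> Q (l-4)" by simp
            with sT show False by simp
          qed
        next
          case False
          have Tsub: "T \<subseteq> {l - 2}"
          proof
            fix x assume x: "x \<in> T"
            have h: "1 \<le> x" "x < l" "x \<noteq> l-1" "x \<noteq> l-3" "x \<noteq> l-4"
              using Tp[OF x] by auto
            with False have "x = l - 2" by linarith
            then show "x \<in> {l-2}" by simp
          qed
          then have "T = {} \<or> T = {l-2}" by blast
          then show False
          proof
            assume "T = {}"
            then have "Q l = Q b" using eq sS by simp
            with b1 show False by simp
          next
            assume T2: "T = {l-2}"
            then have lT: "l - 2 \<in> S" "l - 2 \<ge> 1" using T_def Tp by auto
            have "Q l + Q (l - 2) = Q (l+1)" using eq sS T2 b1 by simp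
            moreover have "l = 3 \<or> l = 4 \<or> l = 5" using lT False by linarith
            moreover have "l \<noteq> 3"
            proof
              assume "l = 3"
              then have "{1,3} \<subseteq> S" using lS lT by auto
              with less.prems(1) show False unfolding legal_iff by blast
            qed
            ultimately show False by (auto simp: Q_0_10)
          qed
        qed
      qed
    qed
  qed
qed

lemma R: "0 < m \<Longrightarrow> m < Q (Suc n) \<Longrightarrow> \<exists>S. S \<subseteq> {1..n} \<and> S \<noteq> {} \<and> FQ_legal S \<and> sum Q S = m"
proof (induction n arbitrary: m rule: less_induct)
  case (less n)
  show ?case
  proof (cases "n \<le> 5")
    case True
    show ?thesis
    proof (cases "m \<le> 5")
      case True
      have "m \<le> n"
      proof (cases "n = 5")
        case False
        with \<open>n \<le> 5\<close> have "Q (Suc n) = Suc n" by (simp add: Q_le5)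
        with less.prems show ?thesis by simp
      qed (use True in simp)
      moreover have "FQ_legal {m}" unfolding legal_iff by auto
      ultimately show ?thesis using less.prems True by (intro exI[of _ "{m}"]) (auto simp: Q_le5)
    next
      case False
      have "Q (Suc n) \<le> 7" using \<open>n \<le> 5\<close> Q_le_iff[of "Suc n" 6] Q_6 by simp
      with less.prems False have m6: "m = 6" by simp
      then have "n = 5" using less.prems \<open>n \<le> 5\<close> by (cases "n = 5") (auto simp: Q_le5)
      have "FQ_legal {2,4}" unfolding legal_iff by auto
      then show ?thesis using m6 \<open>n = 5\<close> by (intro exI[of _ "{2,4}"]) (auto simp: Q_0_10)
    qed
  next
    case False
    then have n6: "n \<ge> 6" by simp
    show ?thesis
    proof (cases "m < Q n")
      case True
      then have "m < Q (Suc (n-1))" using n6 by simp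
      from less.IH[OF _ less.prems(1) this] n6 obtain S where
        "S \<subseteq> {1..n-1}" "S \<noteq> {}" "FQ_legal S" "sum Q S = m" by auto
      then show ?thesis by (intro exI[of _ S]) auto
    next
      case False
      define r where "r = m - Q n"
      have mr: "m = Q n + r" using False r_def by simp
      have e5: "Suc (n - 5) = n - 4" using n6 by simp
      have rlt: "r < Q (Suc (n - 5))" unfolding e5 using less.prems(2) Q_rec1[OF n6] mr by simp
      show ?thesis
      proof (cases "r = 0")
        case True
        have "FQ_legal {n}" unfolding legal_iff by auto
        then show ?thesis using True mr n6 by (intro exI[of _ "{n}"]) auto
      next
        case False
        from less.IH[OF _ _ rlt] False n6 obtain S where
          S: "S \<subseteq> {1..n-5}" "S \<noteq> {}" "FQ_legal S" "sum Q S = r" by auto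
        have nS: "n \<notin> S" using S(1) n6 by auto
        have "FQ_legal (insert n S)"
          unfolding legal_iff
        proof (intro conjI ballI impI)
          fix a b assume ab: "a \<in> insert n S" "b \<in> insert n S" "b < a"
          show "a - b \<notin> {1,3,4}"
          proof (cases "a = n")
            case True
            then have "b \<in> S" using ab by auto
            then have "b \<le> n - 5" using S(1) by auto
            then show ?thesis using True n6 by auto
          next
            case False
            then have "a \<in> S" using ab by auto
            then have "a \<le> n - 5" using S(1) by auto
            then have "b \<in> S" using ab \<open>b < a\<close> n6 by auto
            with \<open>a \<in> S\<close> ab(3) S(3) show ?thesis unfolding legal_iff by blast
          qed
        next
          show "\<not> {1,3} \<subseteq> insert n S" using S(3) n6 unfolding legal_iff by auto
        qed
        moreover have "sum Q (insert n S) = m"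
          using S(4) nS mr sum.insert[of S n Q] S(1) finite_subset by (simp add: finite_subset)
        moreover have "insert n S \<subseteq> {1..n}"
        proof
          fix x assume "x \<in> insert n S"
          then consider "x = n" | "x \<in> S" by blast
          then show "x \<in> {1..n}"
          proof cases
            case 2
            then have "x \<in> {1..n-5}" using S(1) by blast
            then show ?thesis by auto
          qed (use n6 in simp)
        qed
        ultimately show ?thesis by (intro exI[of _ "insert n S"]) auto
      qed
    qed
  qed
qed


lemma fq_list_len: "length (fq_list n) = n"
  by (induction n) (simp_all add: Let_def)

lemma rep_Q: "FQ_representable Q (Suc i) m \<longleftrightarrow> (\<exists>S. S \<subseteq> {1..i} \<and> S \<noteq> {} \<and> FQ_legal S \<and> sum Q S = m)"
  unfolding FQ_representable_def by (simp add: atLeastLessThanSuc_atLeastAtMost)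

lemma fq_list_Q: "j < n \<Longrightarrow> fq_list n ! j = Q (Suc j)"
proof (induction n arbitrary: j)
  case 0
  then show ?case by simp
next
  case (Suc i)
  define x where "x = (if i = 0 then 1 else (LEAST m. 0 < m \<and> \<not> FQ_representable (\<lambda>j. fq_list i ! (j - 1)) (Suc i) m))"
  have fs: "fq_list (Suc i) = fq_list i @ [x]" by (simp add: Let_def x_def)
  show ?case
  proof (cases "j < i")
    case True
    then show ?thesis using fs Suc.IH[OF True] by (simp add: nth_append fq_list_len)
  next
    case False
    then have ji: "j = i" using Suc.prems by simp
    have "x = Q (Suc i)"
    proof (cases "i = 0")
      case True
      then show ?thesis by (simp add: x_def Q_le5)
    next
      case False
      have req: "FQ_representable (\<lambda>j. fq_list i ! (j - 1)) (Suc i) m \<longleftrightarrow> FQ_representable Q (Suc i) m" for m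
      proof -
        have "sum (\<lambda>j. fq_list i ! (j - 1)) S = sum Q S" if "S \<subseteq> {1..<Suc i}" for S
        proof (rule sum.cong)
          fix l assume "l \<in> S"
          then have "1 \<le> l" "l < Suc i" using that by auto
          then show "fq_list i ! (l - 1) = Q l" using Suc.IH[of "l-1"] by simp
        qed simp
        then show ?thesis unfolding FQ_representable_def by metis
      qed
      have "(LEAST m. 0 < m \<and> \<not> FQ_representable (\<lambda>j. fq_list i ! (j - 1)) (Suc i) m) = Q (Suc i)"
      proof (rule Least_equality)
        show "0 < Q (Suc i) \<and> \<not> FQ_representable (\<lambda>j. fq_list i ! (j - 1)) (Suc i) (Q (Suc i))"
          unfolding req rep_Q using G[of _ i "Suc i"] Q_pos[of "Suc i"] by auto
      next
        fix y assume y: "0 < y \<and> \<not> FQ_representable (\<lambda>j. fq_list i ! (j - 1)) (Suc i) y"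
        show "Q (Suc i) \<le> y"
        proof (rule ccontr)
          assume "\<not> Q (Suc i) \<le> y"
          then have "y < Q (Suc i)" by simp
          from R[OF _ this] y show False unfolding req rep_Q by blast
        qed
      qed
      then show ?thesis using False x_def by simp
    qed
    then show ?thesis using fs ji by (simp add: nth_append fq_list_len)
  qed
qed

lemma fq_Q: "fq = Q"
proof
  fix n show "fq n = Q n"
    unfolding fq_def using fq_list_Q[of "n-1" n] by (cases "n = 0") (simp_all add: Q_le5)
qed


lemma g_zero: "greedy6_aux f 0 = []" by (cases f) auto

lemma not_term_6: "Q n \<noteq> 6"
proof (cases "n \<le> 5")
  case True then show ?thesis by (simp add: Q_le5)
next
  case False then have "Q 6 \<le> Q n" by simp
  then show ?thesis using Q_6 by simp
qed

lemma g_term: "n \<ge> 1 \<Longrightarrow> greedy6_aux (Suc f) (Q n) = [n]"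
proof -
  assume n1: "n \<ge> 1"
  have "Q n \<noteq> 0" using Q_pos[OF n1] by simp
  moreover have "\<exists>n'\<ge>1. fq n' = Q n" using n1 fq_Q by auto
  moreover have "(THE n'. n' \<ge> 1 \<and> fq n' = Q n) = n" using n1 by (rule_tac the_equality) (auto simp: fq_Q)
  ultimately show ?thesis by simp
qed

lemma g_6: "greedy6_aux (Suc f) 6 = [4, 2]"
  using not_term_6 by (simp add: fq_Q)

lemma greedy6_6: "greedy6 6 = [4, 2]"
proof -
  have "greedy6 6 = greedy6_aux (Suc 5) 6" unfolding greedy6_def by (simp del: greedy6_aux.simps)
  also have "\<dots> = [4,2]" by (rule g_6)
  finally show ?thesis .
qed

lemma g_step: "n \<ge> 6 \<Longrightarrow> 0 < r \<Longrightarrow> r < Q (n - 4) \<Longrightarrow> greedy6_aux (Suc f) (Q n + r) = n # greedy6_aux f r"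
proof -
  assume n6: "n \<ge> 6" and r0: "0 < r" and rl: "r < Q (n - 4)"
  define m where "m = Q n + r"
  have up: "m < Q (Suc n)" using Q_rec1[OF n6] rl m_def by simp
  have lo: "Q n < m" using r0 m_def by simp
  have nt: "\<not> (\<exists>k\<ge>1. fq k = m)"
  proof
    assume "\<exists>k\<ge>1. fq k = m"
    then obtain k where "Q k = m" using fq_Q by auto
    with up lo have "n < k" "k < Suc n" by (metis Q_less_iff)+
    then show False by simp
  qed
  have "Q 6 \<le> Q n" using n6 by simp
  then have m6: "m \<noteq> 6" using lo Q_6 by simp
  have th: "(THE l. 1 \<le> l \<and> fq l < m \<and> m < fq (Suc l)) = n"
  proof (rule the_equality)
    show "1 \<le> n \<and> fq n < m \<and> m < fq (Suc n)" using n6 lo up fq_Q by simp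
  next
    fix l assume "1 \<le> l \<and> fq l < m \<and> m < fq (Suc l)"
    then have a: "Q l < m" "m < Q (Suc l)" using fq_Q by auto
    have "Q l < Q (Suc n)" using a up by linarith
    moreover have "Q n < Q (Suc l)" using a lo by linarith
    ultimately show "l = n" by simp
  qed
  have m0: "m \<noteq> 0" using lo by simp
  have "greedy6_aux (Suc f) m = (let l = (THE l. 1 \<le> l \<and> fq l < m \<and> m < fq (Suc l)) in l # greedy6_aux f (m - fq l))"
    by (subst greedy6_aux.simps(2)) (simp only: if_not_P[OF m0] if_not_P[OF nt] if_not_P[OF m6])
  also have "\<dots> = n # greedy6_aux f (m - fq n)" unfolding Let_def th ..
  finally show ?thesis using m_def fq_Q by simp
qed

lemma ex_interval: "\<exists>n. Q n \<le> m \<and> m < Q (Suc n)"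
proof (induction m)
  case 0
  show ?case by (rule exI[of _ 0]) (simp add: Q_le5)
next
  case (Suc m)
  then obtain n where n: "Q n \<le> m" "m < Q (Suc n)" by blast
  show ?case
  proof (cases "Suc m < Q (Suc n)")
    case True then show ?thesis using n by (intro exI[of _ n]) simp
  next
    case False
    then have "Suc m = Q (Suc n)" using n by simp
    then show ?thesis using Q_Suc_less[of "Suc n"] by (intro exI[of _ "Suc n"]) simp
  qed
qed

lemma decomp: "m \<ge> 7 \<Longrightarrow> \<not> (\<exists>k. Q k = m) \<Longrightarrow> \<exists>n r. n \<ge> 6 \<and> 0 < r \<and> r < Q (n - 4) \<and> m = Q n + r"
proof -
  assume m7: "m \<ge> 7" and nt: "\<not> (\<exists>k. Q k = m)"
  obtain n where n: "Q n \<le> m" "m < Q (Suc n)" using ex_interval by blast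
  have n6: "n \<ge> 6"
  proof (rule ccontr)
    assume "\<not> n \<ge> 6"
    then have "Q (Suc n) \<le> Q 6" by simp
    with n m7 Q_6 show False by simp
  qed
  have "Q n \<noteq> m" using nt by blast
  then show ?thesis using n n6 Q_rec1[OF n6]
    by (intro exI[of _ n] exI[of _ "m - Q n"]) auto
qed

lemma g_fuel: "m \<le> f \<Longrightarrow> greedy6_aux f m = greedy6 m"
proof (induction m arbitrary: f rule: less_induct)
  case (less m)
  show ?case
  proof (cases "m = 0")
    case True then show ?thesis by (simp add: greedy6_def g_zero)
  next
    case m0: False
    then obtain f' where f': "f = Suc f'" using less.prems by (cases f) auto
    obtain m' where m': "m = Suc m'" using m0 by (cases m) auto
    show ?thesis
    proof (cases "\<exists>k. Q k = m")
      case True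
      then obtain k where k: "Q k = m" by blast
      then have "k \<ge> 1" using m0 by (cases k) (auto simp: Q_0_10)
      then show ?thesis using g_term[of k] k f' m' by (simp add: greedy6_def)
    next
      case nt: False
      show ?thesis
      proof (cases "m = 6")
        case True then show ?thesis using g_6[of f'] f' greedy6_6 by (simp del: greedy6_aux.simps)
      next
        case False
        have "m \<ge> 7"
        proof (rule ccontr)
          assume "\<not> m \<ge> 7"
          with False have "m \<le> 5" by simp
          then have "Q m = m" by (simp add: Q_le5)
          with nt show False by blast
        qed
        from decomp[OF this nt] obtain n r where nr: "n \<ge> 6" "0 < r" "r < Q (n - 4)" "m = Q n + r" by blast
        have rm: "r < m" using nr Q_pos[of n] by simp
        have "greedy6_aux f m = n # greedy6_aux f' r" unfolding f' nr(4) by (rule g_step[OF nr(1-3)])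
        also have "greedy6_aux f' r = greedy6 r" using less.IH[OF rm] rm less.prems f' by simp
        also have "greedy6 r = greedy6_aux m' r" using less.IH[OF rm, of m'] rm m' by simp
        also have "n # greedy6_aux m' r = greedy6_aux (Suc m') (Q n + r)" by (rule g_step[OF nr(1-3), symmetric])
        also have "\<dots> = greedy6 m" unfolding greedy6_def by (simp only: nr(4)[symmetric] m')
        finally show ?thesis .
      qed
    qed
  qed
qed

lemma greedy6_Q: "n \<ge> 1 \<Longrightarrow> greedy6 (Q n) = [n]"
  using g_term[of n "Q n - 1"] Q_pos[of n] by (simp add: greedy6_def)

lemma len_split: "n \<ge> 6 \<Longrightarrow> r < Q (n - 4) \<Longrightarrow> length (greedy6 (Q n + r)) = Suc (length (greedy6 r))"
proof (cases "r = 0")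
  case True
  assume "n \<ge> 6"
  then show ?thesis using True greedy6_Q[of n] by (simp add: greedy6_def g_zero)
next
  case False
  assume n6: "n \<ge> 6" and rl: "r < Q (n - 4)"
  have "Q n \<ge> 1" using Q_pos[of n] n6 by simp
  define f where "f = Q n + r - 1"
  have f: "Q n + r = Suc f" "r \<le> f" using \<open>Q n \<ge> 1\<close> f_def by auto
  have "greedy6 (Q n + r) = n # greedy6_aux f r"
    unfolding greedy6_def f(1) using g_step[OF n6 _ rl, of f] False f(1) by simp
  then show ?thesis using g_fuel[OF f(2)] by simp
qed

lemma len_small: "m \<le> 6 \<Longrightarrow> length (greedy6 m) = (if m = 0 then 0 else if m = 6 then 2 else 1)"
proof -
  assume "m \<le> 6"
  then consider "m = 0" | "m = 6" | "1 \<le> m \<and> m \<le> 5" by linarith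
  then show ?thesis
  proof cases
    case 1 then show ?thesis by (simp add: greedy6_def g_zero)
  next
    case 2 then show ?thesis using greedy6_6 by simp
  next
    case 3 then show ?thesis using greedy6_Q[of m] Q_le5[of m] by simp
  qed
qed


abbreviation "glen m \<equiv> length (greedy6 m)"

lemma qnk_Q: "qnk n k = card {m. m < Q (Suc n) \<and> glen m = k}"
  unfolding qnk_def fq_Q ..

lemma qnk_rec: "n \<ge> 6 \<Longrightarrow> qnk n k = qnk (n-1) k + (if k = 0 then 0 else qnk (n-5) (k-1))"
proof -
  assume n6: "n \<ge> 6"
  define A where "A = {m. m < Q n \<and> glen m = k}"
  define B where "B = {m. Q n \<le> m \<and> m < Q (Suc n) \<and> glen m = k}"
  define C where "C = {r. r < Q (n-4) \<and> Suc (glen r) = k}"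
  have QQ: "Q n < Q (Suc n)" by simp
  have U: "{m. m < Q (Suc n) \<and> glen m = k} = A \<union> B" unfolding A_def B_def using QQ by (auto simp del: Q_less_iff)
  have finA: "finite A" unfolding A_def by simp
  have finB: "finite B" unfolding B_def by simp
  have dis: "A \<inter> B = {}" unfolding A_def B_def by auto
  have cA: "card A = qnk (n-1) k" unfolding qnk_Q A_def using n6 by (simp add: Suc_diff_le)
  have BC: "B = (\<lambda>r. Q n + r) ` C"
  proof
    show "B \<subseteq> (\<lambda>r. Q n + r) ` C"
    proof
      fix m assume m: "m \<in> B"
      then have m1: "Q n \<le> m" "m < Q n + Q (n - 4)" "glen m = k" using Q_rec1[OF n6] unfolding B_def by auto
      define r where "r = m - Q n"
      have "m = Q n + r" "r < Q (n-4)" using m1 r_def by auto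
      moreover have "Suc (glen r) = k" using len_split[OF n6 \<open>r < Q (n-4)\<close>] m1 \<open>m = Q n + r\<close> by simp
      ultimately show "m \<in> (\<lambda>r. Q n + r) ` C" unfolding C_def by auto
    qed
  next
    show "(\<lambda>r. Q n + r) ` C \<subseteq> B"
    proof
      fix m assume "m \<in> (\<lambda>r. Q n + r) ` C"
      then obtain r where r: "r < Q (n-4)" "Suc (glen r) = k" "m = Q n + r" unfolding C_def by auto
      then show "m \<in> B" unfolding B_def using len_split[OF n6 r(1)] Q_rec1[OF n6] by auto
    qed
  qed
  have cB: "card B = card C" unfolding BC by (rule card_image) (simp add: inj_on_def)
  have cC: "card C = (if k = 0 then 0 else qnk (n-5) (k-1))"
  proof (cases "k = 0")
    case True then have "C = {}" unfolding C_def by auto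
    then show ?thesis using True by simp
  next
    case False
    have "Suc (n - 5) = n - 4" using n6 by simp
    then have "C = {m. m < Q (Suc (n-5)) \<and> glen m = k - 1}" unfolding C_def using False by auto
    then show ?thesis using False qnk_Q by simp
  qed
  have "qnk n k = card (A \<union> B)" unfolding qnk_Q U ..
  also have "\<dots> = card A + card B" using card_Un_disjoint[OF finA finB dis] .
  finally show ?thesis using cA cB cC by simp
qed

lemma qnk_small: "n \<le> 5 \<Longrightarrow> qnk n k = (if k = 0 then 1 else if k = 1 then n else if k = 2 \<and> n = 5 then 1 else 0)"
proof -
  assume n5: "n \<le> 5"
  define c where "c = Q (Suc n)"
  have c: "c = (if n = 5 then 7 else Suc n)" unfolding c_def using n5 by (auto simp: Q_le5 Q_6)
  have c7: "c \<le> 7" using c n5 by auto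
  have S: "{m. m < c \<and> glen m = k} = {m. m < c \<and> (if m = 0 then 0 else if m = 6 then 2 else 1) = k}"
  proof (rule Collect_cong)
    fix m
    show "(m < c \<and> glen m = k) = (m < c \<and> (if m = 0 then 0 else if m = 6 then 2 else 1) = k)"
    proof (cases "m < c")
      case True
      then have "m \<le> 6" using c7 by simp
      then show ?thesis using len_small[of m] True by simp
    qed simp
  qed
  also have "\<dots> = (if k = 0 then {0} else if k = 1 then {1..n} else if k = 2 \<and> n = 5 then {6} else {})"
    using c n5 by (auto split: if_splits)
  finally show ?thesis unfolding qnk_Q c_def[symmetric] by simp
qed


lemma qnk0: "qnk n 0 = 1"
proof (induction n rule: less_induct)
  case (less n)
  show ?case
  proof (cases "n \<le> 5")
    case True then show ?thesis by (simp add: qnk_small)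
  next
    case False then show ?thesis using qnk_rec[of n 0] less.IH[of "n-1"] by simp
  qed
qed

lemma qnk1: "qnk n 1 = n"
proof (induction n rule: less_induct)
  case (less n)
  show ?case
  proof (cases "n \<le> 5")
    case True then show ?thesis by (simp add: qnk_small)
  next
    case False then show ?thesis using qnk_rec[of n 1] less.IH[of "n-1"] qnk0 by simp
  qed
qed

lemma qnk_zero: "k \<ge> 2 \<Longrightarrow> n < 5 * (k - 1) \<Longrightarrow> qnk n k = 0"
proof (induction n arbitrary: k rule: less_induct)
  case (less n)
  show ?case
  proof (cases "n \<le> 5")
    case True then show ?thesis using less.prems by (auto simp: qnk_small)
  next
    case False
    then have n6: "n \<ge> 6" by simp
    have a: "qnk (n-1) k = 0" using less.IH[of "n-1" k] less.prems n6 by simp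
    have "k \<noteq> 2" using less.prems n6 by auto
    then have "k - 1 \<ge> 2" using less.prems by simp
    moreover have "n - 5 < 5 * (k - 1 - 1)" using less.prems n6 by (simp add: algebra_simps)
    ultimately have b: "qnk (n-5) (k-1) = 0" using less.IH[of "n-5" "k-1"] n6 by simp
    show ?thesis using qnk_rec[OF n6, of k] a b less.prems by simp
  qed
qed

lemma qnk2: "n \<ge> 6 \<Longrightarrow> real (qnk n 2) = 1 + (real n - 5) * (real n - 4) / 2"
proof (induction n rule: less_induct)
  case (less n)
  show ?case
  proof (cases "n = 6")
    case True
    have "qnk 6 2 = 2" using qnk_rec[of 6 2] qnk_small[of 5 2] qnk1[of 1] by simp
    then show ?thesis using True by simp
  next
    case False
    then have n7: "n \<ge> 7" using less.prems by simp
    have r: "qnk n 2 = qnk (n-1) 2 + (n - 5)" using qnk_rec[of n 2] qnk1[of "n-5"] n7 by simp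
    have ih: "real (qnk (n-1) 2) = 1 + (real (n-1) - 5) * (real (n-1) - 4) / 2"
      using less.IH[of "n-1"] n7 by simp
    have e1: "real (n-1) = real n - 1" "real (n - 5) = real n - 5" using n7 by auto
    show ?thesis using r ih e1 by (simp add: field_simps)
  qed
qed

definition hrow :: "nat \<Rightarrow> int fps" where "hrow n = Abs_fps (\<lambda>k. int (qnk n k))"

lemma hrow_nth: "fps_nth (hrow n) k = int (qnk n k)" unfolding hrow_def by simp

lemma row_eq: "hrow n - (if n = 0 then 0 else hrow (n-1)) - fps_X * (if n < 5 then 0 else hrow (n-5))
  = (if n = 0 then 1 else if n \<le> 4 then fps_X else if n = 5 then fps_X ^ 2 else 0)"
proof (rule fps_ext)
  fix k
  consider "n = 0" | "1 \<le> n \<and> n \<le> 4" | "n = 5" | "n \<ge> 6" by linarith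
  then show "fps_nth (hrow n - (if n = 0 then 0 else hrow (n-1)) - fps_X * (if n < 5 then 0 else hrow (n-5))) k
    = fps_nth (if n = 0 then 1 else if n \<le> 4 then fps_X else if n = 5 then fps_X ^ 2 else 0) k"
  proof cases
    case 1 then show ?thesis by (simp add: hrow_nth qnk_small)
  next
    case 2 then show ?thesis using qnk_small[of n k] qnk_small[of "n-1" k] by (auto simp: hrow_nth)
  next
    case 3 then show ?thesis by (simp add: hrow_nth qnk_small)
  next
    case 4 then show ?thesis using qnk_rec[of n k] by (simp add: hrow_nth)
  qed
qed

lemma H_nth: "fps_nth H n = hrow n" unfolding H_def hrow_def by simp

lemma gf: "let X = (fps_X :: int fps fps); Y = fps_const (fps_X :: int fps) in
         H * (1 - X - Y * X ^ 5) = 1 + (X + X ^ 2 + X ^ 3 + X ^ 4) * Y + X ^ 5 * Y ^ 2"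
  unfolding Let_def
proof (rule fps_ext)
  fix n
  have "H * (1 - fps_X - fps_const fps_X * fps_X ^ 5) = H - H * fps_X - fps_const fps_X * (H * fps_X ^ 5)"
    by (simp add: algebra_simps)
  then have "fps_nth (H * (1 - fps_X - fps_const fps_X * fps_X ^ 5)) n =
     hrow n - (if n = 0 then 0 else hrow (n-1)) - fps_X * (if n < 5 then 0 else hrow (n-5))"
    by (simp add: fps_X_power_mult_right_nth H_nth)
  also have "\<dots> = (if n = 0 then 1 else if n \<le> 4 then fps_X else if n = 5 then fps_X ^ 2 else 0)"
    by (rule row_eq)
  also have "\<dots> = fps_nth (1 + (fps_X + fps_X ^ 2 + fps_X ^ 3 + fps_X ^ 4) * fps_const fps_X + fps_X ^ 5 * fps_const fps_X ^ 2 :: int fps fps) n"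
    by (simp add: fps_const_power power2_eq_square) presburger
  finally show "fps_nth (H * (1 - fps_X - fps_const fps_X * fps_X ^ 5)) n = fps_nth (1 + (fps_X + fps_X ^ 2 + fps_X ^ 3 + fps_X ^ 4) * fps_const fps_X + fps_X ^ 5 * fps_const fps_X ^ 2 :: int fps fps) n" .
qed

theorem propositionB1:
  shows "(\<forall>n. qnk n 0 = 1)
    \<and> qnk 5 2 = 1
    \<and> (\<forall>n. qnk n 1 = n)
    \<and> (\<forall>n\<ge>6. real (qnk n 2) = 1 + (real n - 5) * (real n - 4) / 2)
    \<and> (\<forall>n k. k \<ge> 3 \<and> n \<ge> 5 * (k - 1) \<longrightarrow> qnk n k = qnk (n - 5) (k - 1) + qnk (n - 1) k)
    \<and> (\<forall>n k. k \<ge> 3 \<and> n < 5 * (k - 1) \<longrightarrow> qnk n k = 0)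
    \<and> (\<forall>n\<le>4. qnk n 2 = 0)
    \<and> (let X = (fps_X :: int fps fps); Y = fps_const (fps_X :: int fps) in
         H * (1 - X - Y * X ^ 5) = 1 + (X + X ^ 2 + X ^ 3 + X ^ 4) * Y + X ^ 5 * Y ^ 2)"
proof (intro conjI allI impI)
  show "qnk n 0 = 1" for n by (rule qnk0)
  show "qnk 5 2 = 1" by (simp add: qnk_small)
  show "qnk n 1 = n" for n by (rule qnk1)
  show "real (qnk n 2) = 1 + (real n - 5) * (real n - 4) / 2" if "n \<ge> 6" for n using qnk2 that .
  show "qnk n k = qnk (n - 5) (k - 1) + qnk (n - 1) k" if "k \<ge> 3 \<and> n \<ge> 5 * (k - 1)" for n k
  proof -
    have "n \<ge> 6" using that by linarith
    then show ?thesis using qnk_rec[of n k] that by simp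
  qed
  show "qnk n k = 0" if "k \<ge> 3 \<and> n < 5 * (k - 1)" for n k using qnk_zero that by simp
  show "qnk n 2 = 0" if "n \<le> 4" for n using that by (simp add: qnk_small)
  show "let X = (fps_X :: int fps fps); Y = fps_const (fps_X :: int fps) in
         H * (1 - X - Y * X ^ 5) = 1 + (X + X ^ 2 + X ^ 3 + X ^ 4) * Y + X ^ 5 * Y ^ 2" by (rule gf)
qed

end
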